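(* For each even integer $c\ge2$, let $p_0=p_0(c)$ be the smallest possible output of the Gauss–Legendre distribution $\mathcal{P}_c$. Then $\lim_{c\to\infty}\sigma(p_0)/c=1/j_1$ (limit over even $c$), where $\sigma(p)=\sqrt{(1-p)/p}$ and $j_1$ is the smallest positive zero of the Bessel function $J_0(t)=\sum_{i\ge0}(-1)^i(t/2)^{2i}/(i!)^2$.
   Context: Gauss–Legendre distribution: for $c=2\nu$, let $\widetilde{L}_\nu(t)=\left.\left(\frac{d}{du}\right)^{\nu}(u^2-1)^{\nu}\right|_{u=2t-1}$; $\mathcal{P}_c$ takes as values the $\nu$ zeroes $p$ of $\widetilde L_\nu$ (all in $(0,1)$), each with probability proportional to $\bigl((p(1-p))^{3/2}\widetilde L_\nu{}'(p)^2\bigr)^{-1}$. Thus $p_0$ is the smallest zero of $\widetilde L_\nu$. *)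

theory Defs
  imports "HOL-Analysis.Analysis" "HOL-Computational_Algebra.Polynomial"
begin

definition rodrigues_poly :: "nat \<Rightarrow> real poly" where
  "rodrigues_poly \<nu> = (pderiv ^^ \<nu>) ([:-1, 0, 1:] ^ \<nu>)"

definition shifted_legendre :: "nat \<Rightarrow> real \<Rightarrow> real" where
  "shifted_legendre \<nu> t = poly (rodrigues_poly \<nu>) (2 * t - 1)"

text \<open>Gauss-Legendre distribution P_c for c = 2 nu: support = zeros of L~_nu,
  each with the stated positive weight.\<close>
definition gl_weight :: "nat \<Rightarrow> real \<Rightarrow> real" where
  "gl_weight \<nu> p = 1 / ((p * (1 - p)) powr (3/2) * (deriv (shifted_legendre \<nu>) p)\<^sup>2)"

definition gl_support :: "nat \<Rightarrow> real set" where
  "gl_support \<nu> = {p. shifted_legendre \<nu> p = 0}"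

definition p0 :: "nat \<Rightarrow> real" where
  "p0 c = Min {p \<in> gl_support (c div 2). gl_weight (c div 2) p > 0}"

definition sigma :: "real \<Rightarrow> real" where
  "sigma p = sqrt ((1 - p) / p)"

definition bessel_J0 :: "real \<Rightarrow> real" where
  "bessel_J0 t = (\<Sum>i. (-1) ^ i * (t / 2) ^ (2 * i) / (fact i)\<^sup>2)"

definition j1 :: real where
  "j1 = Inf {t. t > 0 \<and> bessel_J0 t = 0}"

end

theory Submission
  imports Defs
begin


lemma hp_pcompose: "pcompose ((pderiv^^n) p) [:a,1::real:] = (pderiv^^n) (pcompose p [:a,1:])"
proof (induction n)
  case (Suc n)
  have "pderiv ((pderiv^^n) p \<circ>\<^sub>p [:a,1:]) = pderiv ((pderiv^^n) p) \<circ>\<^sub>p [:a,1:]"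
    by (simp add: pderiv_pcompose pderiv_pCons)
  then show ?case using Suc by simp
qed simp

lemma pcompose_pow: "pcompose (p^n) q = (pcompose p q)^n"
  by (induction n) (simp_all add: pcompose_mult pcompose_1)

lemma base_comp: "pcompose [:-1,0,1:] [:-1,1::real:] = [:0,-2,1:]"
  by (simp add: pcompose_pCons algebra_simps)

lemma expand_pow: "[:0,-2,1::real:]^n = (\<Sum>k\<le>n. monom (of_nat (n choose k) * (-2)^(n-k)) (n+k))"
proof -
  have "poly ([:0,-2,1::real:]^n) x = poly (\<Sum>k\<le>n. monom (of_nat (n choose k) * (-2)^(n-k)) (n+k)) x" for x
  proof -
    have "poly ([:0,-2,1::real:]^n) x = (x * (x + -2))^n" by (simp add: poly_power algebra_simps power2_eq_square)
    also have "\<dots> = x^n * (x + -2)^n" by (simp add: power_mult_distrib)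
    also have "\<dots> = x^n * (\<Sum>k\<le>n. of_nat (n choose k) * x^k * (-2)^(n-k))" using binomial_ring[of x "-2" n] by simp
    also have "\<dots> = (\<Sum>k\<le>n. of_nat (n choose k) * (-2)^(n-k) * x^(n+k))"
      by (simp add: sum_distrib_left power_add algebra_simps)
    finally show ?thesis by (simp add: poly_sum poly_monom)
  qed
  then show ?thesis using poly_eq_poly_eq_iff by blast
qed

lemma hp_monom: "(pderiv^^n) (monom (c::real) (n+k)) = monom (c * fact (n+k) / fact k) k"
proof (induction n arbitrary: c)
  case 0 then show ?case by simp
next
  case (Suc n)
  have "(pderiv^^Suc n) (monom c (Suc n + k)) = (pderiv^^n) (pderiv (monom c (Suc n + k)))"
    by (simp only: funpow_Suc_right o_def)
  also have "\<dots> = (pderiv^^n) (monom (of_nat (Suc n + k) * c) (n+k))" by (simp add: pderiv_monom)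
  also have "\<dots> = monom (of_nat (Suc n + k) * c * fact (n+k) / fact k) k" by (rule Suc.IH)
  also have "of_nat (Suc n + k) * c * fact (n+k) / fact k = c * fact (Suc n + k) / fact k"
    by (simp add: algebra_simps)
  finally show ?case .
qed

lemma shifted_legendre_formula:
  "shifted_legendre \<nu> p = (\<Sum>k\<le>\<nu>. of_nat (\<nu> choose k) * (-2)^(\<nu>-k) * fact (\<nu>+k) / fact k * (2*p)^k)"
proof -
  have "shifted_legendre \<nu> p = poly (pcompose (rodrigues_poly \<nu>) [:-1,1:]) (2*p)"
    by (simp add: shifted_legendre_def poly_pcompose algebra_simps)
  also have "pcompose (rodrigues_poly \<nu>) [:-1,1:] = (pderiv^^\<nu>) ([:0,-2,1::real:]^\<nu>)"
    by (simp add: rodrigues_poly_def hp_pcompose pcompose_pow base_comp)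
  also have "\<dots> = (\<Sum>k\<le>\<nu>. monom (of_nat (\<nu> choose k) * (-2)^(\<nu>-k) * fact (\<nu>+k) / fact k) k)"
    by (simp add: expand_pow higher_pderiv_sum hp_monom)
  finally show ?thesis by (simp add: poly_sum poly_monom)
qed



definition ee :: "nat \<Rightarrow> nat \<Rightarrow> real" where
  "ee \<nu> k = (\<Prod>j<k. (real \<nu> - real j) * (real \<nu> + 1 + real j) / (real \<nu>)^2)"

definition cc :: "nat \<Rightarrow> real \<Rightarrow> real" where
  "cc k y = (-1)^k / (fact k)^2 * y^k"

definition ff :: "nat \<Rightarrow> real \<Rightarrow> real" where
  "ff \<nu> y = (\<Sum>k\<le>\<nu>. ee \<nu> k * cc k y)"

lemma fact_lower: "k \<le> n \<Longrightarrow> (fact n :: real) = fact (n - k) * (\<Prod>j<k. (real n - real j))"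
proof (induction k)
  case 0 then show ?case by simp
next
  case (Suc k)
  then have IH: "(fact n :: real) = fact (n - k) * (\<Prod>j<k. (real n - real j))" by simp
  have "n - k = Suc (n - Suc k)" using Suc.prems by simp
  then have "(fact (n - k) :: real) = real (Suc (n - Suc k)) * fact (n - Suc k)"
    by (metis fact_Suc)
  also have "real (Suc (n - Suc k)) = real n - real k" using Suc.prems by (simp add: of_nat_diff)
  finally have F: "(fact (n - k) :: real) = (real n - real k) * fact (n - Suc k)" .
  have "(fact n::real) = fact (n - k) * (\<Prod>j<k. (real n - real j))" by (rule IH)
  also have "\<dots> = fact (n - Suc k) * ((\<Prod>j<k. (real n - real j)) * (real n - real k))"
    unfolding F by (simp add: mult_ac)
  finally show ?case by simp
qed

lemma fact_upper: "(fact (n + k) :: real) = fact n * (\<Prod>j<k. (real n + 1 + real j))"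
  by (induction k) (simp_all add: algebra_simps)

lemma choose_fact: "k \<le> n \<Longrightarrow> real (n choose k) * fact k = (\<Prod>j<k. (real n - real j))"
proof -
  assume k: "k \<le> n"
  have "fact k * fact (n - k) * real (n choose k) = (fact n :: real)"
    using binomial_fact_lemma[OF k] by (metis of_nat_fact of_nat_mult)
  then have "fact (n-k) * (real (n choose k) * fact k) = fact (n - k) * (\<Prod>j<k. (real n - real j))"
    using fact_lower[OF k] by (simp add: algebra_simps)
  then show ?thesis by simp
qed

lemma ee_alt: "ee \<nu> k = (\<Prod>j<k. (real \<nu> - real j)) * (\<Prod>j<k. (real \<nu> + 1 + real j)) / (real \<nu>)^(2*k)"
  by (simp add: ee_def prod_dividef prod.distrib power_mult)

lemma term_id:
  assumes "k \<le> \<nu>" "\<nu> > 0"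
  shows "of_nat (\<nu> choose k) * (-2)^(\<nu>-k) * fact (\<nu>+k) / fact k * (2*(y/(real \<nu>)^2))^k
      = (-2)^\<nu> * fact \<nu> * (ee \<nu> k * cc k y)"
proof -
  have S: "(-2::real)^(\<nu>-k) * 2^k = (-2)^\<nu> * (-1)^k"
  proof -
    have "(-2::real)^\<nu> = (-2)^(\<nu>-k) * (-2)^k" using assms(1) by (simp flip: power_add)
    also have "(-2::real)^k = (-1)^k * 2^k" by (simp flip: power_mult_distrib)
    finally have "(-2::real)^\<nu> * (-1)^k = (-2)^(\<nu>-k) * 2^k * ((-1)^k*(-1)^k)" by (simp add: algebra_simps)
    also have "(-1::real)^k*(-1)^k = 1" by (simp flip: power_add)
    finally show ?thesis by simp
  qed
  have A: "real (\<nu> choose k) * fact k = (\<Prod>j<k. (real \<nu> - real j))" using choose_fact[OF assms(1)] .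
  have B: "(fact (\<nu> + k) :: real) = fact \<nu> * (\<Prod>j<k. (real \<nu> + 1 + real j))" by (rule fact_upper)
  have nz: "(real \<nu>)^(2*k) \<noteq> 0" "(fact k :: real) \<noteq> 0" using assms by auto
  have "ee \<nu> k * cc k y = real (\<nu> choose k) * fact k * (fact (\<nu> + k) / fact \<nu>) / (real \<nu>)^(2*k) * ((-1)^k / (fact k)^2 * y^k)"
    by (simp add: ee_alt cc_def A B)
  also have "\<dots> = real (\<nu> choose k) * fact (\<nu> + k) / fact k / fact \<nu> * (-1)^k * y^k / (real \<nu>)^(2*k)"
    using nz by (simp add: field_simps power2_eq_square)
  finally have E: "ee \<nu> k * cc k y = real (\<nu> choose k) * fact (\<nu> + k) / fact k / fact \<nu> * (-1)^k * y^k / (real \<nu>)^(2*k)" .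
  have "of_nat (\<nu> choose k) * (-2)^(\<nu>-k) * fact (\<nu>+k) / fact k * (2*(y/(real \<nu>)^2))^k
      = real (\<nu> choose k) * fact (\<nu>+k) / fact k * ((-2)^(\<nu>-k) * 2^k) * y^k / (real \<nu>)^(2*k)"
  proof -
    have "(2*(y/(real \<nu>)^2))^k = 2^k * y^k / (real \<nu>)^(2*k)"
      by (simp add: power_mult_distrib power_divide power_mult)
    then show ?thesis by simp
  qed
  also have "\<dots> = (-2)^\<nu> * fact \<nu> * (real (\<nu> choose k) * fact (\<nu> + k) / fact k / fact \<nu> * (-1)^k * y^k / (real \<nu>)^(2*k))"
    unfolding S by (simp add: field_simps)
  finally show ?thesis unfolding E .
qed

lemma legendre_ff:
  assumes "\<nu> > 0"
  shows "shifted_legendre \<nu> (y / (real \<nu>)^2) = (-2)^\<nu> * fact \<nu> * ff \<nu> y"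
  unfolding shifted_legendre_formula ff_def sum_distrib_left
  using term_id[OF _ assms] by (intro sum.cong) auto

lemma legendre_ff':
  assumes "\<nu> > 0"
  shows "shifted_legendre \<nu> = (\<lambda>p. (-2)^\<nu> * fact \<nu> * ff \<nu> ((real \<nu>)^2 * p))"
proof
  fix p
  have "p = ((real \<nu>)^2 * p) / (real \<nu>)^2" using assms by simp
  then show "shifted_legendre \<nu> p = (-2)^\<nu> * fact \<nu> * ff \<nu> ((real \<nu>)^2 * p)"
    using legendre_ff[OF assms, of "(real \<nu>)^2 * p"] by simp
qed



lemma prod_dev:
  fixes a :: "nat \<Rightarrow> real"
  assumes "\<And>j. j < k \<Longrightarrow> 0 \<le> a j \<and> a j \<le> 2 \<and> \<bar>a j - 1\<bar> \<le> d" "0 \<le> d"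
  shows "0 \<le> prod a {..<k} \<and> prod a {..<k} \<le> 2^k \<and> \<bar>prod a {..<k} - 1\<bar> \<le> 2^k * real k * d"
  using assms(1)
proof (induction k)
  case 0 then show ?case by simp
next
  case (Suc k)
  define P where "P = prod a {..<k}"
  have IH0: "0 \<le> P \<and> P \<le> 2^k \<and> \<bar>P - 1\<bar> \<le> 2^k * real k * d"
    unfolding P_def by (rule Suc.IH) (use Suc.prems in auto)
  then have IH: "0 \<le> P" "P \<le> 2^k" "\<bar>P - 1\<bar> \<le> 2^k * real k * d" by auto
  have ak: "0 \<le> a k" "a k \<le> 2" "\<bar>a k - 1\<bar> \<le> d" using Suc.prems[of k] by auto
  have 1: "0 \<le> P * a k" using IH ak by simp
  have 2: "P * a k \<le> 2^k * 2" using IH ak by (intro mult_mono) auto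
  have "\<bar>P * a k - 1\<bar> = \<bar>(P - 1) * a k + (a k - 1)\<bar>" by (simp add: algebra_simps)
  also have "\<dots> \<le> \<bar>P - 1\<bar> * a k + \<bar>a k - 1\<bar>" 
  proof -
    have "\<bar>(P - 1) * a k + (a k - 1)\<bar> \<le> \<bar>(P - 1) * a k\<bar> + \<bar>a k - 1\<bar>" by (rule abs_triangle_ineq)
    also have "\<bar>(P - 1) * a k\<bar> = \<bar>P - 1\<bar> * a k" using ak by (simp add: abs_mult)
    finally show ?thesis .
  qed
  also have "\<dots> \<le> (2^k * real k * d) * 2 + d" using IH ak by (intro add_mono mult_mono) auto
  also have "\<dots> \<le> 2^(Suc k) * real (Suc k) * d"
  proof -
    have "(1::real) \<le> 2^(Suc k)" by (rule one_le_power) simp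
    then have "1 * d \<le> 2^(Suc k) * d" using assms(2) by (intro mult_right_mono) auto
    then show ?thesis by (simp add: algebra_simps)
  qed
  finally show ?case using 1 2 by (simp add: P_def mult_ac)
qed

lemma ee_zero: "\<nu> < k \<Longrightarrow> ee \<nu> k = 0"
  unfolding ee_def by (rule prod_zero) (auto intro: bexI[of _ \<nu>])

lemma one_plus_le_pow2: "1 + real k \<le> 2^k"
  by (induction k) (simp_all add: algebra_simps)

lemma ee_bounds:
  assumes "\<nu> > 0"
  shows "0 \<le> ee \<nu> k \<and> \<bar>ee \<nu> k - 1\<bar> \<le> 2^k * (1 + real k)^3 / real \<nu>"
proof (cases "k \<le> \<nu>")
  case True
  define d where "d = (1 + real k + (real k)^2) / real \<nu>"
  have nu: "real \<nu> \<ge> 1" using assms by simp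
  have "0 \<le> d" by (simp add: d_def)
  have fac: "0 \<le> (real \<nu> - real j) * (real \<nu> + 1 + real j) / (real \<nu>)^2 \<and>
      (real \<nu> - real j) * (real \<nu> + 1 + real j) / (real \<nu>)^2 \<le> 2 \<and>
      \<bar>(real \<nu> - real j) * (real \<nu> + 1 + real j) / (real \<nu>)^2 - 1\<bar> \<le> d" if j: "j < k" for j
  proof (intro conjI)
    have jn: "real j < real \<nu>" using j True by simp
    show "0 \<le> (real \<nu> - real j) * (real \<nu> + 1 + real j) / (real \<nu>)^2" using jn by simp
    have "(real \<nu> - real j) * (real \<nu> + 1 + real j) \<le> 2 * (real \<nu>)^2"
    proof -
      have "(real \<nu> - real j) * (real \<nu> + 1 + real j) = (real \<nu>)^2 + real \<nu> - real j - (real j)^2"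
        by (simp add: algebra_simps power2_eq_square)
      moreover have "real \<nu> \<le> (real \<nu>)^2" using nu by (simp add: power2_eq_square)
      moreover have "0 \<le> (real j)^2" by simp
      ultimately show ?thesis by linarith
    qed
    then show "(real \<nu> - real j) * (real \<nu> + 1 + real j) / (real \<nu>)^2 \<le> 2"
      using nu by (simp add: divide_le_eq)
    have eq: "(real \<nu> - real j) * (real \<nu> + 1 + real j) / (real \<nu>)^2 - 1 = (real \<nu> - real j - (real j)^2) / (real \<nu>)^2"
      using nu by (simp add: field_simps power2_eq_square)
    have jk: "real j \<le> real k" using j by simp
    have "\<bar>real \<nu> - real j - (real j)^2\<bar> \<le> real \<nu> + real j + (real j)^2"
      using zero_le_power2[of "real j"] of_nat_0_le_iff[of j] by (simp only: abs_le_iff) linarith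
    also have "\<dots> \<le> real \<nu> * (1 + real k + (real k)^2)"
    proof -
      have "1 * real k \<le> real \<nu> * real k" using nu by (intro mult_right_mono) auto
      then have "real j \<le> real \<nu> * real k" using jk by simp
      moreover have "(real j)^2 \<le> (real k)^2" using jk by (intro power_mono) auto
      moreover have "1 * (real k)^2 \<le> real \<nu> * (real k)^2" using nu by (intro mult_right_mono) auto
      ultimately have "(real j)^2 \<le> real \<nu> * (real k)^2" "real j \<le> real \<nu> * real k" by linarith+
      then show ?thesis by (simp add: algebra_simps)
    qed
    finally have "\<bar>real \<nu> - real j - (real j)^2\<bar> / (real \<nu>)^2 \<le> real \<nu> * (1 + real k + (real k)^2) / (real \<nu>)^2"
      by (simp add: divide_right_mono)
    also have "\<dots> = d" using nu by (simp add: d_def power2_eq_square)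
    finally show "\<bar>(real \<nu> - real j) * (real \<nu> + 1 + real j) / (real \<nu>)^2 - 1\<bar> \<le> d"
      unfolding eq by simp
  qed
  note pd = prod_dev[of k "\<lambda>j. (real \<nu> - real j) * (real \<nu> + 1 + real j) / (real \<nu>)^2" d, OF fac \<open>0 \<le> d\<close>]
  then have E: "0 \<le> ee \<nu> k" "\<bar>ee \<nu> k - 1\<bar> \<le> 2^k * real k * d" unfolding ee_def by auto
  have "real k * (1 + real k + (real k)^2) \<le> (1 + real k)^3"
    by (simp add: power2_eq_square power3_eq_cube algebra_simps)
  then have "2^k * (real k * (1 + real k + (real k)^2)) \<le> 2^k * (1 + real k)^3"
    by (intro mult_left_mono) auto
  then have "2^k * real k * d \<le> 2^k * (1 + real k)^3 / real \<nu>"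
    using nu by (simp add: d_def divide_right_mono mult.assoc)
  then show ?thesis using E by linarith
next
  case False
  then have z: "ee \<nu> k = 0" by (intro ee_zero) simp
  have "real \<nu> \<le> 1 + real k" using False by simp
  also have "\<dots> \<le> (1 + real k)^3" by (rule self_le_power) auto
  also have "\<dots> = 1 * (1 + real k)^3" by simp
  also have "\<dots> \<le> 2^k * (1 + real k)^3" by (intro mult_right_mono) auto
  finally have "1 \<le> 2^k * (1 + real k)^3 / real \<nu>" using assms by (simp add: le_divide_eq)
  then show ?thesis using z by simp
qed

lemma ee_0 [simp]: "ee \<nu> 0 = 1" by (simp add: ee_def)



definition cd :: "nat \<Rightarrow> real \<Rightarrow> real" where
  "cd m y = (-1)^m / (fact m * fact (Suc m)) * y^m"

definition ffd :: "nat \<Rightarrow> real \<Rightarrow> real" where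
  "ffd \<nu> y = (\<Sum>m<\<nu>. ee \<nu> (Suc m) * cd m y)"

definition hh :: "real \<Rightarrow> real" where "hh y = (\<Sum>k. cc k y)"
definition gg :: "real \<Rightarrow> real" where "gg y = (\<Sum>m. cd m y)"

lemma summable_div_fact: "summable (\<lambda>n. (x::real)^n / fact n)"
  using summable_exp[of x] by (simp add: divide_inverse mult.commute)

lemma pow16: "2^k * (1 + real k)^3 \<le> 16^k"
proof -
  have "(1 + real k)^3 \<le> (2^k)^3" by (intro power_mono one_plus_le_pow2) auto
  then have "2^k * (1 + real k)^3 \<le> 2^k * (2^k)^3" by (intro mult_left_mono) auto
  also have "(2::real)^k * (2^k)^3 = 16^k"
  proof -
    have "((2::real)^k)^3 = (2^3)^k" by (metis power_mult mult.commute)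
    then show ?thesis by (simp flip: power_mult_distrib)
  qed
  finally show ?thesis .
qed

lemma D_ge1: "1 \<le> 2^k * (1 + real k)^3"
proof -
  have "(1::real) \<le> 2^k" by (rule one_le_power) simp
  moreover have "(1::real) \<le> (1 + real k)^3" by (rule one_le_power) simp
  ultimately show ?thesis using mult_mono[of 1 "2^k" 1 "(1+real k)^3"] by simp
qed

lemma approx_gen:
  fixes d c D M :: "nat \<Rightarrow> real"
  assumes nu: "N > 0" and dD: "\<And>k. \<bar>d k - 1\<bar> \<le> D k / N" and cM: "\<And>k. D k * \<bar>c k\<bar> \<le> M k"
    and sM: "summable M" and D1: "\<And>k. 1 \<le> D k"
  shows "\<bar>(\<Sum>k. d k * c k) - (\<Sum>k. c k)\<bar> \<le> (\<Sum>k. M k) / N"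
proof -
  have ca: "\<bar>c k\<bar> \<le> M k" for k
  proof -
    have "1 * \<bar>c k\<bar> \<le> D k * \<bar>c k\<bar>" using D1[of k] by (intro mult_right_mono) auto
    then show ?thesis using cM[of k] by simp
  qed
  have sc: "summable c" using ca by (intro summable_comparison_test[OF _ sM]) auto
  have b: "\<bar>(d k - 1) * c k\<bar> \<le> M k / N" for k
  proof -
    have "\<bar>(d k - 1) * c k\<bar> = \<bar>d k - 1\<bar> * \<bar>c k\<bar>" by (simp add: abs_mult)
    also have "\<dots> \<le> D k / N * \<bar>c k\<bar>" using dD[of k] by (intro mult_right_mono) auto
    also have "\<dots> = (D k * \<bar>c k\<bar>) / N" by simp
    also have "\<dots> \<le> M k / N" using cM[of k] nu by (intro divide_right_mono) auto
    finally show ?thesis .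
  qed
  have sM': "summable (\<lambda>k. M k / N)" using sM by (rule summable_divide)
  have s1: "summable (\<lambda>k. \<bar>(d k - 1) * c k\<bar>)" using b by (intro summable_comparison_test[OF _ sM']) auto
  have s2: "summable (\<lambda>k. (d k - 1) * c k)" by (rule summable_rabs_cancel[OF s1])
  have s3: "summable (\<lambda>k. d k * c k)"
  proof -
    have "summable (\<lambda>k. (d k - 1) * c k + c k)" using s2 sc by (rule summable_add)
    then show ?thesis by (simp add: algebra_simps)
  qed
  have "(\<Sum>k. d k * c k) - (\<Sum>k. c k) = (\<Sum>k. d k * c k - c k)" by (rule suminf_diff[OF s3 sc])
  also have "(\<lambda>k. d k * c k - c k) = (\<lambda>k. (d k - 1) * c k)" by (simp add: fun_eq_iff algebra_simps)
  finally have eq: "(\<Sum>k. d k * c k) - (\<Sum>k. c k) = (\<Sum>k. (d k - 1) * c k)" .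
  have "\<bar>(\<Sum>k. d k * c k) - (\<Sum>k. c k)\<bar> \<le> (\<Sum>k. \<bar>(d k - 1) * c k\<bar>)"
    unfolding eq by (rule summable_rabs[OF s1])
  also have "\<dots> \<le> (\<Sum>k. M k / N)" using b s1 sM' by (intro suminf_le) auto
  also have "\<dots> = (\<Sum>k. M k) / N" using sM by (simp add: suminf_divide)
  finally show ?thesis .
qed

lemma ff_suminf: "ff \<nu> y = (\<Sum>k. ee \<nu> k * cc k y)"
  unfolding ff_def by (rule suminf_finite[symmetric]) (simp_all add: ee_zero)

lemma ffd_suminf: "ffd \<nu> y = (\<Sum>m. ee \<nu> (Suc m) * cd m y)"
  unfolding ffd_def by (rule suminf_finite[symmetric]) (simp_all add: ee_zero)

lemma fact_sq_ge: "(fact k :: real) \<le> (fact k)^2"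
proof -
  have "(1::real) \<le> fact k" by simp
  then have "1 * fact k \<le> fact k * (fact k :: real)" by (intro mult_right_mono) auto
  then show ?thesis by (simp add: power2_eq_square)
qed

lemma ff_close:
  assumes "\<nu> > 0" "\<bar>y\<bar> \<le> 2"
  shows "\<bar>ff \<nu> y - hh y\<bar> \<le> (\<Sum>k. 32^k / fact k) / real \<nu>"
  unfolding ff_suminf hh_def
proof (rule approx_gen[where D = "\<lambda>k. 2^k * (1 + real k)^3"])
  show "0 < real \<nu>" using assms by simp
  show "\<bar>ee \<nu> k - 1\<bar> \<le> 2^k * (1 + real k)^3 / real \<nu>" for k using ee_bounds[OF assms(1)] by blast
  show "summable (\<lambda>k. (32::real)^k / fact k)" by (rule summable_div_fact)
  show "1 \<le> 2^k * (1 + real k)^3" for k by (rule D_ge1)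
  show "2^k * (1 + real k)^3 * \<bar>cc k y\<bar> \<le> 32^k / fact k" for k
  proof -
    have "\<bar>cc k y\<bar> = \<bar>y\<bar>^k / (fact k)^2" by (simp add: cc_def abs_mult power_abs)
    also have "\<dots> \<le> 2^k / fact k"
      using assms(2) fact_sq_ge[of k] by (intro frac_le power_mono) auto
    finally have "2^k * (1 + real k)^3 * \<bar>cc k y\<bar> \<le> 16^k * (2^k / fact k)"
      using pow16[of k] by (intro mult_mono) auto
    also have "\<dots> = 32^k / fact k" by (simp flip: power_mult_distrib)
    finally show ?thesis .
  qed
qed

lemma ffd_close:
  assumes "\<nu> > 0" "\<bar>y\<bar> \<le> 2"
  shows "\<bar>ffd \<nu> y - gg y\<bar> \<le> (\<Sum>k. 16 * (32^k / fact k)) / real \<nu>"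
  unfolding ffd_suminf gg_def
proof (rule approx_gen[where D = "\<lambda>k. 2^Suc k * (1 + real (Suc k))^3"])
  show "0 < real \<nu>" using assms by simp
  show "\<bar>ee \<nu> (Suc k) - 1\<bar> \<le> 2^Suc k * (1 + real (Suc k))^3 / real \<nu>" for k using ee_bounds[OF assms(1)] by blast
  show "summable (\<lambda>k. 16 * ((32::real)^k / fact k))" by (intro summable_mult summable_div_fact)
  show "1 \<le> 2^Suc k * (1 + real (Suc k))^3" for k by (rule D_ge1)
  show "2^Suc k * (1 + real (Suc k))^3 * \<bar>cd k y\<bar> \<le> 16 * (32^k / fact k)" for k
  proof -
    have "fact k \<le> (fact k * fact (Suc k) :: real)"
    proof -
      have "(1::real) \<le> fact (Suc k)" by (rule fact_ge_1)
      then have "fact k * 1 \<le> (fact k * fact (Suc k) :: real)" by (intro mult_left_mono) auto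
      then show ?thesis by simp
    qed
    then have "\<bar>cd k y\<bar> \<le> 2^k / fact k"
      unfolding cd_def using assms(2) by (simp add: abs_mult power_abs) (intro frac_le power_mono, auto)
    then have "2^Suc k * (1 + real (Suc k))^3 * \<bar>cd k y\<bar> \<le> 16^Suc k * (2^k / fact k)"
      using pow16[of "Suc k"] by (intro mult_mono) auto
    also have "\<dots> = 16 * (32^k / fact k)" by (simp flip: power_mult_distrib)
    finally show ?thesis .
  qed
qed

lemma ff_deriv:
  assumes "\<nu> > 0"
  shows "(ff \<nu> has_real_derivative (- ffd \<nu> y)) (at y)"
proof -
  have "((\<lambda>y. \<Sum>k\<le>\<nu>. ee \<nu> k * cc k y) has_real_derivative
      (\<Sum>k\<le>\<nu>. ee \<nu> k * ((-1)^k / (fact k)^2 * (real k * y^(k-1))))) (at y)"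
    unfolding cc_def by (intro DERIV_sum DERIV_cmult) (auto intro!: derivative_eq_intros)
  moreover have "(\<Sum>k\<le>\<nu>. ee \<nu> k * ((-1)^k / (fact k)^2 * (real k * y^(k-1)))) = - ffd \<nu> y"
  proof -
    obtain n where n: "\<nu> = Suc n" using assms by (cases \<nu>) auto
    have t: "ee \<nu> (Suc i) * ((-1)^Suc i / (fact (Suc i))^2 * (real (Suc i) * y^(Suc i - 1))) = - (ee \<nu> (Suc i) * cd i y)" for i
    proof -
      have a: "real (Suc i) \<noteq> 0" "(fact i :: real) \<noteq> 0" by auto
      have "(fact (Suc i) :: real) = real (Suc i) * fact i" by simp
      have gen: "e * ((- s) / (A * F)^2 * (A * z)) = - (e * (s / (F * (A * F)) * z))"
        if "A \<noteq> 0" "F \<noteq> 0" for e s A F z :: real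
        using that by (simp add: field_simps power2_eq_square)
      have "(-1::real)^Suc i = - ((-1)^i)" by simp
      then show ?thesis unfolding cd_def diff_Suc_1 \<open>fact (Suc i) = _\<close>
        using gen[OF a] by (simp only:)
    qed
    let ?T = "\<lambda>k. ee \<nu> k * ((-1)^k / (fact k)^2 * (real k * y^(k-1)))"
    have "(\<Sum>k\<le>\<nu>. ?T k) = ?T 0 + (\<Sum>i\<le>n. ?T (Suc i))" unfolding n by (rule sum.atMost_Suc_shift)
    also have "(\<Sum>i\<le>n. ?T (Suc i)) = (\<Sum>i\<le>n. - (ee \<nu> (Suc i) * cd i y))" by (rule sum.cong[OF refl t])
    also have "\<dots> = - ffd \<nu> y" unfolding ffd_def n by (simp add: lessThan_Suc_atMost sum_negf)
    finally show ?thesis by simp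
  qed
  ultimately show ?thesis unfolding ff_def by simp
qed



definition ch :: "nat \<Rightarrow> real" where "ch k = (-1)^k / (fact k)^2"

lemma cc_ch: "cc k y = ch k * y^k" by (simp add: cc_def ch_def)

lemma summable_cc: "summable (\<lambda>k. ch k * y^k)"
proof (rule summable_comparison_test[OF _ summable_div_fact[of "\<bar>y\<bar>"]])
  show "\<exists>N. \<forall>n\<ge>N. norm (ch n * y^n) \<le> \<bar>y\<bar>^n / fact n"
  proof (intro exI allI impI)
    fix n :: nat
    have "norm (ch n * y^n) = \<bar>y\<bar>^n / (fact n)^2" by (simp add: ch_def abs_mult power_abs)
    also have "\<dots> \<le> \<bar>y\<bar>^n / fact n" using fact_sq_ge[of n] by (intro divide_left_mono) auto
    finally show "norm (ch n * y^n) \<le> \<bar>y\<bar>^n / fact n" .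
  qed
qed

lemma summable_cd: "summable (\<lambda>m. cd m y)"
proof (rule summable_comparison_test[OF _ summable_div_fact[of "\<bar>y\<bar>"]])
  show "\<exists>N. \<forall>n\<ge>N. norm (cd n y) \<le> \<bar>y\<bar>^n / fact n"
  proof (intro exI allI impI)
    fix n :: nat
    have "fact n \<le> (fact n * fact (Suc n) :: real)"
      using mult_left_mono[of 1 "fact (Suc n)" "fact n :: real"] fact_ge_1[of "Suc n"] by simp
    then have "\<bar>y\<bar>^n / (fact n * fact (Suc n)) \<le> \<bar>y\<bar>^n / fact n" by (intro divide_left_mono) auto
    then show "norm (cd n y) \<le> \<bar>y\<bar>^n / fact n" by (simp add: cd_def abs_mult power_abs)
  qed
qed

lemma hh_powser: "hh y = (\<Sum>k. ch k * y^k)" by (simp add: hh_def cc_ch)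

lemma hh_cont: "isCont hh x"
proof -
  have "isCont (\<lambda>x. \<Sum>k. ch k * x^k) x" by (rule isCont_powser_converges_everywhere) (rule summable_cc)
  moreover have "hh = (\<lambda>x. \<Sum>k. ch k * x^k)" by (simp add: fun_eq_iff hh_powser)
  ultimately show ?thesis by simp
qed

lemma hh_0: "hh 0 = 1" unfolding hh_powser using powser_zero[of ch] by (simp add: ch_def)

lemma hh_deriv: "(hh has_real_derivative (- gg x)) (at x)"
proof -
  have d: "((\<lambda>x. \<Sum>k. ch k * x^k) has_real_derivative (\<Sum>n. diffs ch n * x^n)) (at x)"
    by (rule termdiffs_strong_converges_everywhere) (rule summable_cc)
  have "diffs ch n * x^n = - cd n x" for n
  proof -
    have a: "real (Suc n) \<noteq> 0" "(fact n :: real) \<noteq> 0" by auto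
    have f: "(fact (Suc n) :: real) = real (Suc n) * fact n" by simp
    have gen: "A * ((- s) / (A * F)^2) * z = - (s / (F * (A * F)) * z)"
      if "A \<noteq> 0" "F \<noteq> 0" for s A F z :: real
      using that by (simp add: field_simps power2_eq_square)
    have "(-1::real)^Suc n = - ((-1)^n)" by simp
    then show ?thesis unfolding diffs_def ch_def cd_def f using gen[OF a] by (simp only:)
  qed
  then have "(\<Sum>n. diffs ch n * x^n) = (\<Sum>n. - cd n x)" by simp
  also have "\<dots> = - gg x" unfolding gg_def by (rule suminf_minus[OF summable_cd])
  moreover have "hh = (\<lambda>x. \<Sum>k. ch k * x^k)" by (simp add: fun_eq_iff hh_powser)
  ultimately show ?thesis using d by simp
qed



lemma poly_bound: "0 \<le> y \<Longrightarrow> y \<le> 2 \<Longrightarrow> 5/18 \<le> 1 - y/2 + y^2/12 - y^3/144 \<and> (y::real) \<le> 2"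
proof -
  assume y: "0 \<le> y" "y \<le> 2"
  have "1 - y/2 + y^2/12 - y^3/144 - 5/18 = (2 - y) * ((y - 5)^2 + 27) / 144"
    by (simp add: algebra_simps power2_eq_square power3_eq_cube)
  moreover have "0 \<le> (2 - y) * ((y - 5)^2 + 27)" using y by (intro mult_nonneg_nonneg) auto
  then have "0 \<le> (2 - y) * ((y - 5)^2 + 27) / 144" by simp
  ultimately show ?thesis using y by linarith
qed

lemma gg_lower:
  assumes y: "0 \<le> y" "y \<le> 2"
  shows "5/18 \<le> gg y"
proof -
  define a where "a m = y^m / (fact m * fact (Suc m))" for m
  have cda: "cd m y = (-1)^m * a m" for m by (simp add: cd_def a_def)
  have apos: "0 \<le> a m" for m using y by (simp add: a_def)
  have amono: "a (Suc m) \<le> a m" for m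
  proof -
    have nz: "real (Suc m) \<noteq> 0" "real (Suc (Suc m)) \<noteq> 0" "(fact m::real) \<noteq> 0" "(fact (Suc m)::real) \<noteq> 0" by auto
    have "a (Suc m) = y * y^m / ((real (Suc m) * fact m) * (real (Suc (Suc m)) * fact (Suc m)))"
      unfolding a_def by (simp only: fact_Suc power_Suc of_nat_mult)
    also have "\<dots> = a m * (y / (real (Suc m) * real (Suc (Suc m))))"
      unfolding a_def using nz by (simp add: field_simps)
    also have "\<dots> \<le> a m * 1"
    proof (intro mult_left_mono apos)
      have "2 \<le> real (Suc m) * real (Suc (Suc m))"
        using mult_mono[of 1 "real (Suc m)" 2 "real (Suc (Suc m))"] by simp
      then show "y / (real (Suc m) * real (Suc (Suc m))) \<le> 1" using y by simp
    qed
    finally show ?thesis by simp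
  qed
  have asum: "summable a"
  proof (rule summable_comparison_test[OF _ summable_div_fact[of y]], intro exI allI impI)
    fix n :: nat
    have "fact n \<le> (fact n * fact (Suc n) :: real)"
      using mult_left_mono[of 1 "fact (Suc n)" "fact n :: real"] fact_ge_1[of "Suc n"] by simp
    then have "y^n / (fact n * fact (Suc n)) \<le> y^n / fact n" using y by (intro divide_left_mono) auto
    then show "norm (a n) \<le> y^n / fact n" using apos[of n] by (simp add: a_def)
  qed
  note L = summable_Leibniz'(2)[OF summable_LIMSEQ_zero[OF asum] apos amono, of 2]
  have "(\<Sum>i<2*2. (-1)^i * a i) = 1 - y/2 + y^2/12 - y^3/144"
    by (simp add: a_def eval_nat_numeral fact_Suc power2_eq_square power3_eq_cube field_simps)
  then have "1 - y/2 + y^2/12 - y^3/144 \<le> gg y" using L unfolding gg_def cda by simp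
  then show ?thesis using poly_bound[OF y] by linarith
qed



lemma hh_2: "hh 2 < 0"
proof -
  define b where "b i = (2::real)^(Suc i) / (fact (Suc i))^2" for i
  have bpos: "0 \<le> b i" for i by (simp add: b_def)
  have bmono: "b (Suc i) \<le> b i" for i
  proof -
    have nz: "real (Suc (Suc i)) \<noteq> 0" "(fact (Suc i)::real) \<noteq> 0" by auto
    have "b (Suc i) = 2 * 2^(Suc i) / ((real (Suc (Suc i)) * fact (Suc i))^2)"
      unfolding b_def by (simp only: fact_Suc[of "Suc i"] power_Suc of_nat_mult)
    also have "\<dots> = b i * (2 / (real (Suc (Suc i)))^2)"
      unfolding b_def using nz by (simp add: field_simps power2_eq_square)
    also have "\<dots> \<le> b i * 1"
    proof (intro mult_left_mono bpos)
      have "2 \<le> real (Suc (Suc i))" by simp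
      then have "2 * 1 \<le> (real (Suc (Suc i)))^2" unfolding power2_eq_square by (intro mult_mono) auto
      then show "2 / (real (Suc (Suc i)))^2 \<le> 1" by simp
    qed
    finally show ?thesis by simp
  qed
  have bsum: "summable b"
  proof (rule summable_comparison_test[OF _ summable_mult[OF summable_div_fact[of 2], of 2]], intro exI allI impI)
    fix n :: nat
    have "(fact n :: real) \<le> fact (Suc n)" by (rule fact_mono) simp
    also have "\<dots> \<le> (fact (Suc n))^2" by (rule fact_sq_ge)
    finally have "2 * 2^n / (fact (Suc n))^2 \<le> 2 * 2^n / (fact n :: real)" by (intro divide_left_mono) auto
    then show "norm (b n) \<le> 2 * (2^n / fact n)" using bpos[of n] by (simp add: b_def)
  qed
  note L = summable_Leibniz'(2)[OF summable_LIMSEQ_zero[OF bsum] bpos bmono, of 2]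
  have "(\<Sum>i<2*2. (-1)^i * b i) = 43/36"
    by (simp add: b_def eval_nat_numeral fact_Suc)
  then have L': "43/36 \<le> (\<Sum>i. (-1)^i * b i)" using L by simp
  define f where "f k = ch k * 2^k" for k
  have fs: "summable f" unfolding f_def by (rule summable_cc)
  have "(\<Sum>n. f (Suc n)) = (\<Sum>n. - ((-1)^n * b n))"
    by (simp add: f_def ch_def b_def)
  also have "\<dots> = - (\<Sum>n. (-1)^n * b n)"
    by (rule suminf_minus) (rule summable_Leibniz'(1)[OF summable_LIMSEQ_zero[OF bsum] bpos bmono])
  finally have A: "(\<Sum>n. f (Suc n)) = - (\<Sum>n. (-1)^n * b n)" .
  have B: "hh 2 = suminf f" by (simp add: hh_powser f_def[abs_def])
  have C: "f 0 = 1" by (simp add: f_def ch_def)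
  have "hh 2 = 1 - (\<Sum>n. (-1)^n * b n)"
    using suminf_split_head[OF fs] A B C by linarith
  then show ?thesis using L' by simp
qed

lemma hh_decr:
  assumes "0 \<le> x" "x < y" "y \<le> 2"
  shows "hh y < hh x"
proof (rule DERIV_neg_imp_decreasing[OF assms(2)])
  fix z assume "x \<le> z" "z \<le> y"
  then have "5/18 \<le> gg z" using assms by (intro gg_lower) auto
  then show "\<exists>d. (hh has_real_derivative d) (at z) \<and> d < 0" using hh_deriv[of z] by (intro exI[of _ "- gg z"]) auto
qed

definition x1 :: real where "x1 = (SOME x. 0 \<le> x \<and> x \<le> 2 \<and> hh x = 0)"

lemma x1_props: "0 < x1" "x1 < 2" "hh x1 = 0"
proof -
  have "\<exists>x. 0 \<le> x \<and> x \<le> 2 \<and> hh x = 0"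
    using IVT2[of hh 2 0 0] hh_2 hh_0 hh_cont by auto
  then have h: "0 \<le> x1 \<and> x1 \<le> 2 \<and> hh x1 = 0" unfolding x1_def by (rule someI_ex)
  then show "hh x1 = 0" by simp
  show "0 < x1" using h hh_0 by (cases "x1 = 0") auto
  show "x1 < 2" using h hh_2 by (cases "x1 = 2") auto
qed

lemma hh_pos: "0 \<le> x \<Longrightarrow> x < x1 \<Longrightarrow> 0 < hh x"
  using hh_decr[of x x1] x1_props by auto

lemma hh_neg: "x1 < x \<Longrightarrow> x \<le> 2 \<Longrightarrow> hh x < 0"
  using hh_decr[of x1 x] x1_props by auto

lemma J0_hh: "bessel_J0 t = hh ((t/2)^2)"
  unfolding bessel_J0_def hh_def cc_def by (simp add: power_mult)

lemma j1_eq: "j1 = 2 * sqrt x1"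
  unfolding j1_def
proof (rule cInf_eq_minimum)
  have "((2 * sqrt x1)/2)^2 = x1" using x1_props by simp
  then show "2 * sqrt x1 \<in> {t. t > 0 \<and> bessel_J0 t = 0}" using x1_props by (simp add: J0_hh)
next
  fix t assume "t \<in> {t. t > 0 \<and> bessel_J0 t = 0}"
  then have t: "t > 0" "hh ((t/2)^2) = 0" by (auto simp: J0_hh)
  show "2 * sqrt x1 \<le> t"
  proof (rule ccontr)
    assume "\<not> 2 * sqrt x1 \<le> t"
    then have "t/2 < sqrt x1" by simp
    then have "(t/2)^2 < (sqrt x1)^2" using t by (intro power_strict_mono) auto
    then have "(t/2)^2 < x1" using x1_props by simp
    then show False using hh_pos[of "(t/2)^2"] t by simp
  qed
qed



lemma ff_pos_nonpos:
  assumes "y \<le> 0"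
  shows "0 < ff \<nu> y"
proof -
  have nn: "0 \<le> ee \<nu> k * cc k y" for k
  proof -
    have "cc k y = (-y)^k / (fact k)^2" by (simp add: cc_def power_minus')
    then have "0 \<le> cc k y" using assms by simp
    then show ?thesis using ee_bounds[of \<nu> k] ee_zero[of \<nu> k]
      by (cases "\<nu> = 0"; cases "\<nu> < k") (auto simp: ee_def)
  qed
  have "ee \<nu> 0 * cc 0 y \<le> ff \<nu> y" unfolding ff_def
    by (rule member_le_sum) (use nn in auto)
  then show ?thesis by (simp add: cc_def)
qed

definition C1 :: real where "C1 = (\<Sum>k. 32^k / fact k)"
definition C2 :: real where "C2 = (\<Sum>k. 16 * (32^k / fact k))"

lemma C_nonneg: "0 \<le> C1" "0 \<le> C2"
  unfolding C1_def C2_def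
  by (intro suminf_nonneg summable_div_fact summable_mult; simp)+

lemma ffd_pos:
  assumes "\<nu> > 0" "0 \<le> z" "z \<le> 2" "C2 / real \<nu> < 5/18"
  shows "0 < ffd \<nu> z"
proof -
  have "\<bar>ffd \<nu> z - gg z\<bar> \<le> C2 / real \<nu>" unfolding C2_def using assms by (intro ffd_close) auto
  moreover have "5/18 \<le> gg z" using assms by (intro gg_lower) auto
  ultimately show ?thesis using assms(4) by linarith
qed

lemma ff_decr:
  assumes "\<nu> > 0" "C2 / real \<nu> < 5/18" "0 \<le> x" "x < y" "y \<le> 2"
  shows "ff \<nu> y < ff \<nu> x"
proof (rule DERIV_neg_imp_decreasing[OF assms(4)])
  fix z assume "x \<le> z" "z \<le> y"
  then have "0 < ffd \<nu> z" using assms by (intro ffd_pos) auto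
  then show "\<exists>d. (ff \<nu> has_real_derivative d) (at z) \<and> d < 0"
    using ff_deriv[OF assms(1), of z] by (intro exI[of _ "- ffd \<nu> z"]) auto
qed

lemma legendre_deriv:
  assumes "\<nu> > 0"
  shows "deriv (shifted_legendre \<nu>) p = (-2)^\<nu> * fact \<nu> * (- ffd \<nu> ((real \<nu>)^2 * p) * (real \<nu>)^2)"
proof -
  have "((\<lambda>p. ff \<nu> ((real \<nu>)^2 * p)) has_real_derivative (- ffd \<nu> ((real \<nu>)^2 * p) * (real \<nu>)^2)) (at p)"
    by (rule DERIV_chain2[OF ff_deriv[OF assms]]) (auto intro!: derivative_eq_intros)
  then have "((\<lambda>p. (-2)^\<nu> * fact \<nu> * ff \<nu> ((real \<nu>)^2 * p)) has_real_derivative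
      (-2)^\<nu> * fact \<nu> * (- ffd \<nu> ((real \<nu>)^2 * p) * (real \<nu>)^2)) (at p)"
    by (rule DERIV_cmult)
  then show ?thesis unfolding legendre_ff'[OF assms] by (rule DERIV_imp_deriv)
qed

lemma support_finite:
  assumes "\<nu> > 0"
  shows "finite {p. shifted_legendre \<nu> p = 0}"
proof -
  have R: "rodrigues_poly \<nu> \<noteq> 0"
  proof
    assume "rodrigues_poly \<nu> = 0"
    then have "shifted_legendre \<nu> (0 / (real \<nu>)^2) = 0" by (simp add: shifted_legendre_def)
    then show False using legendre_ff[OF assms, of 0] ff_pos_nonpos[of 0 \<nu>] by simp
  qed
  have "{p. shifted_legendre \<nu> p = 0} \<subseteq> (\<lambda>u. (u + 1) / 2) ` {u. poly (rodrigues_poly \<nu>) u = 0}"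
  proof
    fix p assume "p \<in> {p. shifted_legendre \<nu> p = 0}"
    then have "2 * p - 1 \<in> {u. poly (rodrigues_poly \<nu>) u = 0}" by (simp add: shifted_legendre_def)
    moreover have "p = ((2 * p - 1) + 1) / 2" by simp
    ultimately show "p \<in> (\<lambda>u. (u + 1) / 2) ` {u. poly (rodrigues_poly \<nu>) u = 0}" by blast
  qed
  then show ?thesis using poly_roots_finite[OF R] finite_surj by blast
qed



lemma main_eps:
  assumes eps: "0 < \<epsilon>" "\<epsilon> < x1" "x1 + \<epsilon> < 2"
  shows "\<exists>N. \<forall>\<nu>\<ge>N. \<bar>(real \<nu>)^2 * p0 (2*\<nu>) - x1\<bar> < \<epsilon>"
proof -
  define a where "a = x1 - \<epsilon>"
  define b where "b = x1 + \<epsilon>"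
  have ha: "0 < hh a" unfolding a_def using eps by (intro hh_pos) auto
  have hb: "hh b < 0" unfolding b_def using eps by (intro hh_neg) auto
  define \<delta> where "\<delta> = min (hh a) (- hh b)"
  have dpos: "0 < \<delta>" using ha hb by (simp add: \<delta>_def)
  obtain N0 :: nat where N0: "C1/\<delta> + 4*C2 + 2 < real N0" using reals_Archimedean2 by blast
  show ?thesis
  proof (intro exI[of _ N0] allI impI)
    fix \<nu> assume "N0 \<le> \<nu>"
    then have nu: "C1/\<delta> + 4*C2 + 2 < real \<nu>" using N0 by linarith
    have "0 \<le> C1/\<delta>" using C_nonneg dpos by simp
    then have "2 < real \<nu>" using nu C_nonneg by linarith
    then have "2 < \<nu>" by simp
    then have nupos: "\<nu> > 0" "real \<nu> \<ge> 2" by auto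
    have "C1 / \<delta> < real \<nu>" using nu C_nonneg by linarith
    then have "C1 < \<delta> * real \<nu>" using dpos by (simp add: divide_less_eq mult.commute)
    then have c1: "C1 / real \<nu> < \<delta>" using nupos by (simp add: divide_less_eq)
    have "C2 < 5/18 * real \<nu>" using nu C_nonneg \<open>0 \<le> C1/\<delta>\<close> by linarith
    then have c2: "C2 / real \<nu> < 5/18" using nupos by (simp add: divide_less_eq)
    have "\<bar>ff \<nu> a - hh a\<bar> \<le> C1 / real \<nu>" unfolding C1_def using nupos eps a_def by (intro ff_close) auto
    then have fa: "0 < ff \<nu> a" using c1 \<delta>_def by linarith
    have "\<bar>ff \<nu> b - hh b\<bar> \<le> C1 / real \<nu>" unfolding C1_def using nupos eps b_def x1_props by (intro ff_close) auto
    then have fb: "ff \<nu> b < 0" using c1 \<delta>_def by linarith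
    have cont: "\<forall>x. a \<le> x \<and> x \<le> b \<longrightarrow> isCont (ff \<nu>) x"
      using ff_deriv[OF nupos(1)] DERIV_isCont by blast
    obtain ys where ys: "a \<le> ys" "ys \<le> b" "ff \<nu> ys = 0"
      using IVT2[of "ff \<nu>" b 0 a] fa fb cont eps a_def b_def by auto
    have ysb: "ys < b" using ys fb by (cases "ys = b") auto
    have ys0: "0 < ys" using ys eps a_def by simp
    have ys2: "ys < 2" using ysb eps b_def by simp
    have "2 * real \<nu> \<le> real \<nu> * real \<nu>" using nupos by (intro mult_right_mono) auto
    then have nu2: "(real \<nu>)^2 \<ge> 2" unfolding power2_eq_square using nupos by linarith
    define ps where "ps = ys / (real \<nu>)^2"
    have nuq: "(real \<nu>)^2 * ps = ys" using nupos by (simp add: ps_def)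
    have Lps: "shifted_legendre \<nu> ps = 0" using legendre_ff[OF nupos(1), of ys] ys by (simp add: ps_def)
    have ps01: "0 < ps" "ps < 1" using ys0 ys2 nu2 nupos by (auto simp: ps_def divide_less_eq)
    have "0 < ffd \<nu> ys" using nupos ys0 ys2 c2 by (intro ffd_pos) auto
    then have dps: "deriv (shifted_legendre \<nu>) ps \<noteq> 0"
      unfolding legendre_deriv[OF nupos(1)] nuq using nupos by simp
    have wps: "gl_weight \<nu> ps > 0"
    proof -
      have "0 < ps * (1 - ps)" using ps01 by simp
      then have "0 < (ps * (1 - ps)) powr (3/2)" using ps01 by simp
      moreover have "0 < (deriv (shifted_legendre \<nu>) ps)^2" using dps by simp
      ultimately show ?thesis unfolding gl_weight_def by simp
    qed
    define S where "S = {p \<in> gl_support \<nu>. gl_weight \<nu> p > 0}"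
    have p0eq: "p0 (2*\<nu>) = Min S" by (simp add: p0_def S_def)
    have finS: "finite S"
      by (rule finite_subset[OF _ support_finite[OF nupos(1)]]) (auto simp: S_def gl_support_def)
    have psS: "ps \<in> S" using Lps wps by (simp add: S_def gl_support_def)
    have p0S: "p0 (2*\<nu>) \<in> S" unfolding p0eq using finS psS by (intro Min_in) auto
    have p0le: "p0 (2*\<nu>) \<le> ps" unfolding p0eq using finS psS by (intro Min_le) auto
    define q where "q = (real \<nu>)^2 * p0 (2*\<nu>)"
    have "(real \<nu>)^2 * p0 (2*\<nu>) \<le> (real \<nu>)^2 * ps" using p0le by (intro mult_left_mono) auto
    then have qb: "q < b" unfolding q_def using ysb nuq by simp
    have "shifted_legendre \<nu> (p0 (2*\<nu>)) = 0" using p0S by (simp add: S_def gl_support_def)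
    then have fq: "ff \<nu> q = 0" unfolding legendre_ff'[OF nupos(1)] q_def by simp
    have qa: "a < q"
    proof (rule ccontr)
      assume "\<not> a < q"
      then have "q \<le> a" by simp
      show False
      proof (cases "q \<le> 0")
        case True then show False using ff_pos_nonpos[OF True, of \<nu>] fq by simp
      next
        case False
        show False
        proof (cases "q = a")
          case True then show False using fa fq by simp
        next
          case False
          then have "ff \<nu> a < ff \<nu> q" using \<open>q \<le> a\<close> \<open>\<not> q \<le> 0\<close> nupos c2 eps a_def
            by (intro ff_decr) auto
          then show False using fa fq by simp
        qed
      qed
    qed
    show "\<bar>(real \<nu>)^2 * p0 (2*\<nu>) - x1\<bar> < \<epsilon>" using qa qb unfolding q_def a_def b_def by linarith
  qed
qed

theorem proposition7:
  shows "((\<lambda>\<nu>::nat. sigma (p0 (2 * \<nu>)) / real (2 * \<nu>)) \<longlongrightarrow> 1 / j1) at_top"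
proof -
  define q where "q \<nu> = (real \<nu>)^2 * p0 (2*\<nu>)" for \<nu>
  have qlim: "q \<longlonglongrightarrow> x1"
    unfolding lim_sequentially
  proof (intro allI impI)
    fix r :: real assume r: "r > 0"
    define \<epsilon> where "\<epsilon> = min r (min (x1/2) ((2 - x1)/2))"
    have e1: "\<epsilon> \<le> (2 - x1)/2" "\<epsilon> \<le> x1/2" "\<epsilon> \<le> r" unfolding \<epsilon>_def by (auto simp: min_def)
    have "0 < \<epsilon>" using r x1_props by (auto simp: \<epsilon>_def)
    have "\<epsilon> < x1" using e1(2) x1_props(1) \<open>0 < \<epsilon>\<close> by linarith
    moreover have "x1 + \<epsilon> < 2"
    proof -
      have "2 * \<epsilon> \<le> 2 - x1" using e1(1) by simp
      then show ?thesis using x1_props(2) by linarith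
    qed
    ultimately have "0 < \<epsilon>" "\<epsilon> < x1" "x1 + \<epsilon> < 2" "\<epsilon> \<le> r" using e1 \<open>0 < \<epsilon>\<close> by auto
    then obtain N where "\<forall>\<nu>\<ge>N. \<bar>q \<nu> - x1\<bar> < \<epsilon>" using main_eps unfolding q_def by blast
    then show "\<exists>no. \<forall>n\<ge>no. dist (q n) x1 < r"
    proof (intro exI[of _ N] allI impI)
      fix n assume "N \<le> n"
      then have "\<bar>q n - x1\<bar> < \<epsilon>" using \<open>\<forall>\<nu>\<ge>N. \<bar>q \<nu> - x1\<bar> < \<epsilon>\<close> by blast
      then show "dist (q n) x1 < r" using \<open>\<epsilon> \<le> r\<close> by (simp add: dist_real_def)
    qed
  qed
  have ev1: "eventually (\<lambda>\<nu>. 0 < q \<nu>) sequentially" using order_tendstoD(1)[OF qlim, of 0] x1_props by simp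
  have ev2: "eventually (\<lambda>\<nu>. (0::nat) < \<nu>) sequentially" by (rule eventually_gt_at_top)
  have ev: "eventually (\<lambda>\<nu>. sqrt ((1 - q \<nu> * (1 / real \<nu>)^2) / q \<nu>) / 2 = sigma (p0 (2 * \<nu>)) / real (2 * \<nu>)) sequentially"
    using ev1 ev2
  proof eventually_elim
    case (elim \<nu>)
    define p where "p = p0 (2*\<nu>)"
    have nz: "real \<nu> > 0" using elim by simp
    have pq: "q \<nu> * (1 / real \<nu>)^2 = p" unfolding q_def p_def using nz by (simp add: power2_eq_square)
    have "0 < (real \<nu>)^2 * p" using elim unfolding q_def p_def by simp
    then have pp: "p \<noteq> 0" by auto
    have "(1 - p) / p = (real \<nu>)^2 * ((1 - p) / ((real \<nu>)^2 * p))" using nz pp by (simp add: field_simps)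
    then have "(1 - p) / p = (real \<nu>)^2 * ((1 - p) / q \<nu>)" unfolding q_def p_def .
    then have "sqrt ((1 - p) / p) = sqrt ((real \<nu>)^2) * sqrt ((1 - p) / q \<nu>)"
      by (simp only: real_sqrt_mult)
    then have "sqrt ((1 - p) / p) = real \<nu> * sqrt ((1 - p) / q \<nu>)" by simp
    then show ?case unfolding pq sigma_def p_def[symmetric] using nz by simp
  qed
  have lim: "(\<lambda>\<nu>. sqrt ((1 - q \<nu> * (1 / real \<nu>)^2) / q \<nu>) / 2) \<longlonglongrightarrow> sqrt ((1 - x1 * 0^2) / x1) / 2"
    using x1_props by (intro tendsto_intros qlim lim_inverse_n') auto
  have val: "sqrt ((1 - x1 * 0^2) / x1) / 2 = 1 / j1" using x1_props by (simp add: j1_eq real_sqrt_divide)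
  show ?thesis using Lim_transform_eventually[OF lim[unfolded val] ev] .
qed

end
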